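(* Let $b\ge 2$ and $m\ge 1$ be integers. Let $\mathcal P_0,\ldots,\mathcal P_{b-1}$ be (not necessarily distinct) $(0,m-1,2)$-nets in base $b$, each contained in $\mathbb Q(b^{m-1})\times\mathbb Q(b^{m-1})$, and let $\pi_0,\ldots,\pi_{b^{m-1}-1}$ be permutations of $\{0,1,\ldots,b-1\}$. Put $\widehat{\mathcal P}=\bigcup_{j=0}^{b-1}A_b(\mathcal P_j+(j,0))$, where $A_b(x,y)=(x/b,y)$, and $\mathcal P=\psi_{b,m}(\widehat{\mathcal P})$, where $\psi_{b,m}:\mathbb Q(b^m)\times\mathbb Q(b^{m-1})\to\mathbb Q(b^m)\times\mathbb Q(b^m)$ is given by $\psi_{b,m}(x,y)=\left(x,\,y+\pi_{b^{m-1}y}(\lfloor bx\rfloor)\,b^{-m}\right)$. Then $\mathcal P$ is a $(0,m,2)$-net in base $b$.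
   Context: For $k\ge 0$, $\mathbb Q(b^k)=\{0,\frac{1}{b^k},\frac{2}{b^k},\ldots,\frac{b^k-1}{b^k}\}$. An elementary $b$-adic interval in $[0,1)^2$ is a set $\prod_{j=1}^2\left[\frac{a_j}{b^{d_j}},\frac{a_j+1}{b^{d_j}}\right)$ with $d_j\in\mathbb N_0$ and $a_j\in\{0,1,\ldots,b^{d_j}-1\}$; its volume is $b^{-(d_1+d_2)}$. For integers $0\le t\le m$, a $b^m$-element point set in $[0,1)^s$ is a $(t,m,s)$-net in base $b$ if every elementary $b$-adic interval of volume $b^{t-m}$ contains exactly $b^t$ of its points. For $\mathcal P\subseteq\mathbb R^2$ and $v\in\mathbb R^2$, $\mathcal P+v=\{p+v:p\in\mathcal P\}$. *)

theory Defs
  imports Complex_Main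
begin

definition Qgrid :: "nat \<Rightarrow> nat \<Rightarrow> real set" where
  "Qgrid b k = {real a / real b ^ k | a. a < b ^ k}"

definition elem_interval :: "nat \<Rightarrow> nat \<Rightarrow> nat \<Rightarrow> nat \<Rightarrow> nat \<Rightarrow> (real \<times> real) set" where
  "elem_interval b d1 d2 a1 a2 =
     {(x, y). real a1 / real b ^ d1 \<le> x \<and> x < (real a1 + 1) / real b ^ d1 \<and>
              real a2 / real b ^ d2 \<le> y \<and> y < (real a2 + 1) / real b ^ d2}"

definition is_net2 :: "nat \<Rightarrow> nat \<Rightarrow> nat \<Rightarrow> (real \<times> real) set \<Rightarrow> bool" where
  "is_net2 b t m P \<longleftrightarrow> t \<le> m \<and> finite P \<and> card P = b ^ m \<and>
     P \<subseteq> {0..<1} \<times> {0..<1} \<and>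
     (\<forall>d1 d2 a1 a2. d1 + d2 = m - t \<and> a1 < b ^ d1 \<and> a2 < b ^ d2 \<longrightarrow>
        card (P \<inter> elem_interval b d1 d2 a1 a2) = b ^ t)"

definition A_map :: "nat \<Rightarrow> real \<times> real \<Rightarrow> real \<times> real" where
  "A_map b p = (fst p / real b, snd p)"

definition psi_map :: "nat \<Rightarrow> nat \<Rightarrow> (nat \<Rightarrow> nat \<Rightarrow> nat) \<Rightarrow> real \<times> real \<Rightarrow> real \<times> real" where
  "psi_map b m \<pi> p = (fst p,
      snd p + real (\<pi> (nat \<lfloor>real b ^ (m - 1) * snd p\<rfloor>) (nat \<lfloor>real b * fst p\<rfloor>)) / real b ^ m)"

end

theory Submission
  imports Defs
begin


lemma l1: fixes a x c k :: real assumes "c>0" "k>0" shows "a / c \<le> x / (c*k) \<longleftrightarrow> a * k \<le> x"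
proof -
  have "a/c \<le> x/(c*k) \<longleftrightarrow> (a/c)*(c*k) \<le> x" using assms by (simp add: le_divide_eq)
  moreover have "(a/c)*(c*k) = a*k" using assms by simp
  ultimately show ?thesis by simp
qed
lemma l2: fixes a x c k :: real assumes "c>0" "k>0" shows "x / (c*k) < (a+1) / c \<longleftrightarrow> x < (a+1) * k"
proof -
  have "x/(c*k) < (a+1)/c \<longleftrightarrow> x < ((a+1)/c)*(c*k)" using assms by (simp add: divide_less_eq)
  moreover have "((a+1)/c)*(c*k) = (a+1)*k" using assms by simp
  ultimately show ?thesis by simp
qed

definition gmap :: "nat \<Rightarrow> nat \<Rightarrow> nat \<times> nat \<Rightarrow> real \<times> real" where
  "gmap b k p = (real (fst p) / real b ^ k, real (snd p) / real b ^ k)"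

lemma div_interval:
  fixes X a d n b :: nat
  assumes "b > 0" "d \<le> n"
  shows "(real a / real b ^ d \<le> real X / real b ^ n \<and> real X / real b ^ n < (real a + 1) / real b ^ d)
         \<longleftrightarrow> X div b ^ (n - d) = a"
proof -
  define k where "k = b ^ (n - d)"
  have bn: "real b ^ n = real b ^ d * real k" using assms
    by (simp add: k_def power_add[symmetric])
  have kp: "k > 0" using assms by (simp add: k_def)
  have bd: "real b ^ d > 0" using assms by simp
  have 1: "real a / real b ^ d \<le> real X / real b ^ n \<longleftrightarrow> a * k \<le> X"
  proof -
    have "real a / real b ^ d \<le> real X / real b ^ n \<longleftrightarrow> real a * real k \<le> real X"
      unfolding bn by (rule l1[OF bd]) (use kp in simp)
    also have "\<dots> \<longleftrightarrow> a * k \<le> X" by (simp only: of_nat_mult[symmetric] of_nat_le_iff)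
    finally show ?thesis .
  qed
  have 2: "real X / real b ^ n < (real a + 1) / real b ^ d \<longleftrightarrow> X < (a + 1) * k"
  proof -
    have "real X / real b ^ n < (real a + 1) / real b ^ d \<longleftrightarrow> real X < (real a + 1) * real k"
      unfolding bn by (rule l2[OF bd]) (use kp in simp)
    also have "(real a + 1) * real k = real ((a+1)*k)" by (simp add: algebra_simps)
    also have "real X < \<dots> \<longleftrightarrow> X < (a + 1) * k" by (simp only: of_nat_less_iff)
    finally show ?thesis .
  qed
  have "X div k = a \<longleftrightarrow> a * k \<le> X \<and> X < (a + 1) * k"
  proof -
    have "X div k = a \<longleftrightarrow> a \<le> X div k \<and> X div k < a+1" by auto
    then show ?thesis by (simp only: less_eq_div_iff_mult_less_eq[OF kp] div_less_iff_less_mult[OF kp])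
  qed
  then show ?thesis using 1 2 by (simp add: k_def)
qed


lemma gmap_inj: "b > 0 \<Longrightarrow> inj (gmap b k)"
  by (auto simp: inj_on_def gmap_def prod_eq_iff)

lemma net_iff:
  fixes N :: "(nat \<times> nat) set"
  assumes b: "b \<ge> 2" and sub: "N \<subseteq> {..<b^n} \<times> {..<b^n}"
  shows "is_net2 b 0 n (gmap b n ` N) \<longleftrightarrow> card N = b^n \<and>
     (\<forall>d1 d2 a1 a2. d1 + d2 = n \<and> a1 < b ^ d1 \<and> a2 < b ^ d2 \<longrightarrow>
        card {p\<in>N. fst p div b ^ (n - d1) = a1 \<and> snd p div b ^ (n - d2) = a2} = 1)"
proof -
  have b0: "b > 0" using b by simp
  have inj: "inj_on (gmap b n) A" for A using gmap_inj[OF b0] by (rule inj_on_subset) simp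
  have fin: "finite N" using sub finite_subset by blast
  have box: "gmap b n ` N \<subseteq> {0..<1} \<times> {0..<1}"
  proof
    fix q assume "q \<in> gmap b n ` N"
    then obtain X Y where XY: "(X,Y) \<in> N" "q = gmap b n (X,Y)" by auto
    have "X < b^n" "Y < b^n" using XY sub by auto
    then have "real X < real b ^ n" "real Y < real b ^ n" by (metis of_nat_less_iff of_nat_power)+
    then show "q \<in> {0..<1} \<times> {0..<1}" using XY b0 by (simp add: gmap_def)
  qed
  have mem: "gmap b n p \<in> elem_interval b d1 d2 a1 a2 \<longleftrightarrow>
      fst p div b ^ (n - d1) = a1 \<and> snd p div b ^ (n - d2) = a2"
    if "d1 \<le> n" "d2 \<le> n" for d1 d2 a1 a2 p
    using div_interval[OF b0 that(1), of a1 "fst p"] div_interval[OF b0 that(2), of a2 "snd p"]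
    unfolding elem_interval_def gmap_def by (cases p) auto
  have int: "gmap b n ` N \<inter> elem_interval b d1 d2 a1 a2 =
     gmap b n ` {p\<in>N. fst p div b ^ (n - d1) = a1 \<and> snd p div b ^ (n - d2) = a2}"
    if "d1 \<le> n" "d2 \<le> n" for d1 d2 a1 a2
    using mem[OF that] by blast
  have c: "card (gmap b n ` N \<inter> elem_interval b d1 d2 a1 a2) =
     card {p\<in>N. fst p div b ^ (n - d1) = a1 \<and> snd p div b ^ (n - d2) = a2}"
    if "d1 + d2 = n" for d1 d2 a1 a2
    using that by (simp add: int card_image[OF inj])
  show ?thesis
    unfolding is_net2_def
    using fin box c by (simp add: card_image[OF inj])
qed



lemma digit_split:
  fixes j w c a :: nat
  assumes "c > 0" "w < c"
  shows "j * c + w = a \<longleftrightarrow> j = a div c \<and> w = a mod c"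
proof
  assume h: "j * c + w = a"
  have "a div c = j" unfolding h[symmetric] using assms by simp
  moreover have "a mod c = w" unfolding h[symmetric] using assms by simp
  ultimately show "j = a div c \<and> w = a mod c" by simp
next
  assume "j = a div c \<and> w = a mod c"
  then show "j * c + w = a" by simp
qed

lemma count_lemma:
  fixes b n B :: nat and N :: "nat \<Rightarrow> (nat \<times> nat) set" and \<pi> :: "nat \<Rightarrow> nat \<Rightarrow> nat"
  assumes b: "b \<ge> 2" and B: "B = b ^ n"
    and Nsub: "\<And>j. j < b \<Longrightarrow> N j \<subseteq> {..<B} \<times> {..<B}"
    and Nnet: "\<And>j d1 d2 a1 a2. j < b \<Longrightarrow> d1 + d2 = n \<Longrightarrow> a1 < b ^ d1 \<Longrightarrow> a2 < b ^ d2 \<Longrightarrow>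
        card {p\<in>N j. fst p div b ^ (n - d1) = a1 \<and> snd p div b ^ (n - d2) = a2} = 1"
    and perm: "\<And>i. i < B \<Longrightarrow> bij_betw (\<pi> i) {..<b} {..<b}"
    and d: "d1 + d2 = Suc n" and a1: "a1 < b ^ d1" and a2: "a2 < b ^ d2"
  shows "card {q \<in> Sigma {..<b} N. (case q of (j,u,v) \<Rightarrow>
            (j*B+u) div b ^ (Suc n - d1) = a1 \<and> (b*v + \<pi> v j) div b ^ (Suc n - d2) = a2)} = 1"
proof -
  have b0: "b > 0" using b by simp
  have piless: "\<pi> v j < b" if "v < B" "j < b" for v j
    using perm[OF that(1)] that(2) by (auto simp: bij_betw_def)
  have injP: "inj_on (\<lambda>p. (j0::nat, p)) A" for j0 A by (auto simp: inj_on_def)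
  show ?thesis
  proof (cases d1)
    case 0
    then have d2: "d2 = Suc n" using d by simp
    have a10: "a1 = 0" using a1 0 by simp
    define v0 where "v0 = a2 div b"
    define r where "r = a2 mod b"
    have v0B: "v0 < B" using a2 d2 B b0 by (simp add: v0_def div_less_iff_less_mult mult.commute)
    have rb: "r < b" using b0 by (simp add: r_def)
    have bij0: "bij_betw (\<pi> v0) {..<b} {..<b}" using perm[OF v0B] .
    define j0 where "j0 = inv_into {..<b} (\<pi> v0) r"
    have rim: "r \<in> \<pi> v0 ` {..<b}" using bij0 rb by (simp add: bij_betw_def)
    have j0b: "j0 < b" using inv_into_into[OF rim] by (simp add: j0_def)
    have pij0: "\<pi> v0 j0 = r" using f_inv_into_f[OF rim] by (simp add: j0_def)
    have inj0: "inj_on (\<pi> v0) {..<b}" using bij0 by (simp add: bij_betw_def)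
    have eq: "{q \<in> Sigma {..<b} N. (case q of (j,u,v) \<Rightarrow>
            (j*B+u) div b ^ (Suc n - d1) = a1 \<and> (b*v + \<pi> v j) div b ^ (Suc n - d2) = a2)}
          = (\<lambda>p. (j0, p)) ` {p\<in>N j0. fst p div b ^ (n - 0) = 0 \<and> snd p div b ^ (n - n) = v0}"
    proof (intro equalityI subsetI)
      fix q assume q: "q \<in> {q \<in> Sigma {..<b} N. (case q of (j,u,v) \<Rightarrow>
            (j*B+u) div b ^ (Suc n - d1) = a1 \<and> (b*v + \<pi> v j) div b ^ (Suc n - d2) = a2)}"
      obtain j u v where qj: "q = (j,u,v)" by (cases q) auto
      have jb: "j < b" and uv: "(u,v) \<in> N j" using q qj by auto
      have uB: "u < B" and vB: "v < B" using Nsub[OF jb] uv by auto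
      have e: "b*v + \<pi> v j = a2" using q qj d2 by simp
      have "v * b + \<pi> v j = a2" using e by (simp add: mult.commute)
      then have vv: "v = v0" and pv: "\<pi> v j = r"
        using digit_split[OF b0 piless[OF vB jb]] by (auto simp: v0_def r_def)
      have "j = j0" using inj0 jb j0b pv pij0 vv by (auto simp: inj_on_def)
      moreover have "u div b ^ n = 0" using uB B by simp
      ultimately show "q \<in> (\<lambda>p. (j0, p)) ` {p\<in>N j0. fst p div b ^ (n - 0) = 0 \<and> snd p div b ^ (n - n) = v0}"
        using qj uv vv by auto
    next
      fix q assume q: "q \<in> (\<lambda>p. (j0, p)) ` {p\<in>N j0. fst p div b ^ (n - 0) = 0 \<and> snd p div b ^ (n - n) = v0}"
      then obtain u v where qj: "q = (j0,u,v)" and uv: "(u,v) \<in> N j0" and vv: "v = v0" by auto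
      have uB: "u < B" using Nsub[OF j0b] uv by auto
      have "j0*B+u < b*B"
      proof -
        have "j0*B+u < j0*B + B" using uB by simp
        also have "\<dots> = (j0+1)*B" by simp
        also have "\<dots> \<le> b*B" using j0b by (intro mult_right_mono) auto
        finally show ?thesis .
      qed
      then have x: "(j0*B+u) div b ^ (Suc n - d1) = a1" using 0 a10 B by simp
      have y: "b*v + \<pi> v j0 = a2" using vv pij0 by (simp add: v0_def r_def)
      show "q \<in> {q \<in> Sigma {..<b} N. (case q of (j,u,v) \<Rightarrow>
            (j*B+u) div b ^ (Suc n - d1) = a1 \<and> (b*v + \<pi> v j) div b ^ (Suc n - d2) = a2)}"
        using qj uv j0b x y d2 by simp
    qed
    show ?thesis unfolding eq card_image[OF injP]
      by (rule Nnet[OF j0b]) (use v0B B in auto)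
  next
    case (Suc d)
    have dn: "d + d2 = n" using d Suc by simp
    define e where "e = n - d"
    have Be: "B = b ^ e * b ^ d" using B dn by (simp add: e_def power_add[symmetric])
    define j0 where "j0 = a1 div b ^ d"
    define a1' where "a1' = a1 mod b ^ d"
    have bd0: "b ^ d > 0" using b0 by simp
    have be0: "b ^ e > 0" using b0 by simp
    have j0b: "j0 < b" using a1 Suc bd0 by (simp add: j0_def div_less_iff_less_mult mult.commute)
    have a1'b: "a1' < b ^ d" using bd0 by (simp add: a1'_def)
    have xk: "(j*B+u) div b ^ (Suc n - d1) = a1 \<longleftrightarrow> j = j0 \<and> u div b ^ (n - d) = a1'"
      if "u < B" for j u
    proof -
      have "j*B+u = u + (j*b^d)*b^e" unfolding Be by (simp add: algebra_simps)
      then have "(j*B+u) div b ^ e = (u + (j*b^d)*b^e) div b ^ e" by (simp only:)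
      also have "\<dots> = j * b ^ d + u div b ^ e"
        by (rule trans[OF div_mult_self1]) (use be0 in simp_all)
      finally have "(j*B+u) div b ^ e = j * b ^ d + u div b ^ e" .
      moreover have "u div b ^ e < b ^ d" using that Be be0 by (simp add: div_less_iff_less_mult mult.commute)
      ultimately show ?thesis using digit_split[OF bd0] Suc by (simp add: e_def j0_def a1'_def)
    qed
    have yk: "(b*v + r) div b ^ (Suc n - d2) = v div b ^ d" if "r < b" for v r
    proof -
      have "Suc n - d2 = Suc d" using dn by simp
      then have "(b*v + r) div b ^ (Suc n - d2) = (b*v + r) div b div b ^ d"
        by (simp add: div_mult2_eq)
      also have "(b*v + r) div b = v" using that b0 by simp
      finally show ?thesis .
    qed
    have eq: "{q \<in> Sigma {..<b} N. (case q of (j,u,v) \<Rightarrow>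
            (j*B+u) div b ^ (Suc n - d1) = a1 \<and> (b*v + \<pi> v j) div b ^ (Suc n - d2) = a2)}
          = (\<lambda>p. (j0, p)) ` {p\<in>N j0. fst p div b ^ (n - d) = a1' \<and> snd p div b ^ (n - d2) = a2}"
    proof (intro equalityI subsetI)
      fix q assume q: "q \<in> {q \<in> Sigma {..<b} N. (case q of (j,u,v) \<Rightarrow>
            (j*B+u) div b ^ (Suc n - d1) = a1 \<and> (b*v + \<pi> v j) div b ^ (Suc n - d2) = a2)}"
      obtain j u v where qj: "q = (j,u,v)" by (cases q) auto
      have jb: "j < b" and uv: "(u,v) \<in> N j" using q qj by auto
      have uB: "u < B" and vB: "v < B" using Nsub[OF jb] uv by auto
      have c1: "j = j0 \<and> u div b ^ (n - d) = a1'" using q qj xk[OF uB] by simp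
      have c2: "v div b ^ d = a2" using q qj yk[OF piless[OF vB jb]] by simp
      show "q \<in> (\<lambda>p. (j0, p)) ` {p\<in>N j0. fst p div b ^ (n - d) = a1' \<and> snd p div b ^ (n - d2) = a2}"
        using qj uv c1 c2 dn by auto
    next
      fix q assume q: "q \<in> (\<lambda>p. (j0, p)) ` {p\<in>N j0. fst p div b ^ (n - d) = a1' \<and> snd p div b ^ (n - d2) = a2}"
      then obtain u v where qj: "q = (j0,u,v)" and uv: "(u,v) \<in> N j0"
        and c1: "u div b ^ (n - d) = a1'" and c2: "v div b ^ (n - d2) = a2" by auto
      have uB: "u < B" and vB: "v < B" using Nsub[OF j0b] uv by auto
      have x: "(j0*B+u) div b ^ (Suc n - d1) = a1" using xk[OF uB] c1 by simp
      have "n - d2 = d" using dn by simp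
      then have y: "(b*v + \<pi> v j0) div b ^ (Suc n - d2) = a2" using yk[OF piless[OF vB j0b]] c2 by simp
      show "q \<in> {q \<in> Sigma {..<b} N. (case q of (j,u,v) \<Rightarrow>
            (j*B+u) div b ^ (Suc n - d1) = a1 \<and> (b*v + \<pi> v j) div b ^ (Suc n - d2) = a2)}"
        using qj uv j0b x y by simp
    qed
    show ?thesis unfolding eq card_image[OF injP]
      by (rule Nnet[OF j0b dn a1'b a2])
  qed
qed



theorem mainTheorem6:
  fixes b m :: nat and Ps :: "nat \<Rightarrow> (real \<times> real) set" and \<pi> :: "nat \<Rightarrow> nat \<Rightarrow> nat"
  assumes "b \<ge> 2" and "m \<ge> 1"
    and "\<And>j. j < b \<Longrightarrow> is_net2 b 0 (m - 1) (Ps j)"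
    and "\<And>j. j < b \<Longrightarrow> Ps j \<subseteq> Qgrid b (m - 1) \<times> Qgrid b (m - 1)"
    and "\<And>i. i < b ^ (m - 1) \<Longrightarrow> bij_betw (\<pi> i) {..<b} {..<b}"
  shows "is_net2 b 0 m
           (psi_map b m \<pi> ` (\<Union>j<b. A_map b ` ((\<lambda>p. (fst p + real j, snd p)) ` Ps j)))"
proof -
  obtain n where mn: "m = Suc n" using assms(2) by (cases m) auto
  have b0: "b > 0" using assms(1) by simp
  define B where "B = b ^ n"
  have B0: "B > 0" using b0 by (simp add: B_def)
  define N where "N = (\<lambda>j. {p. fst p < B \<and> snd p < B \<and> gmap b n p \<in> Ps j})"
  have Nsub: "N j \<subseteq> {..<B} \<times> {..<B}" for j by (auto simp: N_def)
  have PsN: "Ps j = gmap b n ` N j" if "j < b" for j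
  proof (intro equalityI subsetI)
    fix q assume q: "q \<in> Ps j"
    then have "q \<in> Qgrid b n \<times> Qgrid b n" using assms(4)[OF that] mn by auto
    then obtain u v where "u < b ^ n" "v < b ^ n" "q = (real u / real b ^ n, real v / real b ^ n)"
      by (auto simp: Qgrid_def)
    then show "q \<in> gmap b n ` N j" using q
      by (auto simp: N_def B_def gmap_def image_iff intro!: exI[of _ "(u,v)"])
  qed (auto simp: N_def)
  have Nnet: "card {p\<in>N j. fst p div b ^ (n - d1) = a1 \<and> snd p div b ^ (n - d2) = a2} = 1"
    if "j < b" "d1 + d2 = n" "a1 < b ^ d1" "a2 < b ^ d2" for j d1 d2 a1 a2
    using assms(3)[OF that(1)] net_iff[OF assms(1) Nsub[of j, unfolded B_def]] PsN[OF that(1)] that mn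
    by auto
  have piless: "\<pi> v j < b" if "v < B" "j < b" for v j
    using assms(5)[of v] that mn by (auto simp: bij_betw_def B_def)
  define F where "F = (\<lambda>(j::nat,u::nat,v::nat). (j*B+u, b*v + \<pi> v j))"
  define S where "S = Sigma {..<b} N"
  have pt: "psi_map b m \<pi> (A_map b ((\<lambda>p. (fst p + real j, snd p)) (gmap b n (u,v)))) = gmap b m (F (j,u,v))"
    if "j < b" "(u,v) \<in> N j" for j u v
  proof -
    have uB: "u < B" and vB: "v < B" using that(2) by (auto simp: N_def)
    have bn0: "real b ^ n > 0" using b0 by simp
    have ru: "real u < real b ^ n" using uB B_def by (metis of_nat_less_iff of_nat_power)
    have e1: "nat \<lfloor>real b ^ (m - 1) * snd (A_map b ((\<lambda>p. (fst p + real j, snd p)) (gmap b n (u,v))))\<rfloor> = v"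
      using bn0 mn by (simp add: A_map_def gmap_def)
    have "real b * fst (A_map b ((\<lambda>p. (fst p + real j, snd p)) (gmap b n (u,v)))) = real u / real b ^ n + real j"
      using b0 by (simp add: A_map_def gmap_def)
    moreover have "\<lfloor>real u / real b ^ n + real j\<rfloor> = int j"
      using ru bn0 by (simp add: floor_eq_iff divide_less_eq)
    ultimately have e2: "nat \<lfloor>real b * fst (A_map b ((\<lambda>p. (fst p + real j, snd p)) (gmap b n (u,v))))\<rfloor> = j"
      by simp
    have f1: "(real u / real b ^ n + real j) / real b = real (j*B+u) / real b ^ m"
      using b0 bn0 by (simp add: mn B_def field_simps)
    have f2: "real v / real b ^ n + real (\<pi> v j) / real b ^ m = real (b*v + \<pi> v j) / real b ^ m"
      using b0 bn0 by (simp add: mn field_simps)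
    show ?thesis
      unfolding psi_map_def e1 e2 using f1 f2
      by (simp add: A_map_def gmap_def F_def)
  qed
  have img: "psi_map b m \<pi> ` (\<Union>j<b. A_map b ` ((\<lambda>p. (fst p + real j, snd p)) ` Ps j)) = gmap b m ` (F ` S)"
  proof -
    have "psi_map b m \<pi> ` (\<Union>j<b. A_map b ` ((\<lambda>p. (fst p + real j, snd p)) ` Ps j))
       = (\<Union>j<b. (\<lambda>(u,v). psi_map b m \<pi> (A_map b ((\<lambda>p. (fst p + real j, snd p)) (gmap b n (u,v))))) ` N j)"
      by (auto simp: PsN image_UN image_image split_def)
    also have "\<dots> = (\<Union>j<b. (\<lambda>(u,v). gmap b m (F (j,u,v))) ` N j)"
      using pt by (intro SUP_cong image_cong) auto
    also have "\<dots> = gmap b m ` (F ` S)"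
      by (auto simp: S_def)
    finally show ?thesis .
  qed
  have NOsub: "F ` S \<subseteq> {..<b^m} \<times> {..<b^m}"
  proof
    fix p assume "p \<in> F ` S"
    then obtain j u v where jb: "j < b" and uv: "(u,v) \<in> N j" and p: "p = F (j,u,v)"
      by (auto simp: S_def)
    have uB: "u < B" and vB: "v < B" using uv by (auto simp: N_def)
    have "j*B+u < j*B + B" using uB by simp
    also have "\<dots> = (j+1)*B" by simp
    also have "\<dots> \<le> b*B" using jb by (intro mult_right_mono) auto
    finally have x: "j*B+u < b^m" by (simp add: mn B_def)
    have "b*v + \<pi> v j < b*v + b" using piless[OF vB jb] by simp
    also have "\<dots> = b*(v+1)" by simp
    also have "\<dots> \<le> b*B" using vB by (intro mult_left_mono) auto
    finally have y: "b*v + \<pi> v j < b^m" by (simp add: mn B_def)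
    show "p \<in> {..<b^m} \<times> {..<b^m}" using x y p by (simp add: F_def)
  qed
  have injF: "inj_on F S"
  proof (rule inj_onI)
    fix q q' assume q: "q \<in> S" and q': "q' \<in> S" and eq: "F q = F q'"
    obtain j u v where qq: "q = (j,u,v)" by (cases q) auto
    obtain j' u' v' where qq': "q' = (j',u',v')" by (cases q') auto
    have jb: "j < b" and uv: "(u,v) \<in> N j" using q qq by (auto simp: S_def)
    have jb': "j' < b" and uv': "(u',v') \<in> N j'" using q' qq' by (auto simp: S_def)
    have uB: "u < B" and vB: "v < B" using uv by (auto simp: N_def)
    have uB': "u' < B" and vB': "v' < B" using uv' by (auto simp: N_def)
    have X: "j*B+u = j'*B+u'" and Y: "v*b + \<pi> v j = v'*b + \<pi> v' j'"
      using eq qq qq' by (auto simp: F_def mult.commute)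
    have "v = (v'*b + \<pi> v' j') div b \<and> \<pi> v j = (v'*b + \<pi> v' j') mod b"
      using digit_split[OF b0 piless[OF vB jb]] Y by blast
    moreover have "v' = (v'*b + \<pi> v' j') div b" 
      using digit_split[OF b0 piless[OF vB' jb']] by blast
    ultimately have vv: "v = v'" by simp
    have "j = (j'*B+u') div B \<and> u = (j'*B+u') mod B"
      using digit_split[OF B0 uB] X by blast
    moreover have "j' = (j'*B+u') div B \<and> u' = (j'*B+u') mod B"
      using digit_split[OF B0 uB'] by blast
    ultimately show "q = q'" using qq qq' vv by simp
  qed
  have cardS: "card S = b ^ m"
  proof -
    have cN: "card (N j) = B" if "j < b" for j
      using assms(3)[OF that] net_iff[OF assms(1) Nsub[of j, unfolded B_def]] PsN[OF that] mn
      by (simp add: B_def)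
    have fN: "finite (N j)" for j using Nsub[of j] finite_subset by blast
    have "card S = (\<Sum>j<b. card (N j))" unfolding S_def using fN by simp
    also have "\<dots> = (\<Sum>j<b. B)" using cN by simp
    also have "\<dots> = b ^ m" by (simp add: mn B_def)
    finally show ?thesis .
  qed
  have cnt: "card {p\<in>F ` S. fst p div b ^ (m - d1) = a1 \<and> snd p div b ^ (m - d2) = a2} = 1"
    if "d1 + d2 = m" "a1 < b ^ d1" "a2 < b ^ d2" for d1 d2 a1 a2
  proof -
    have "{p\<in>F ` S. fst p div b ^ (m - d1) = a1 \<and> snd p div b ^ (m - d2) = a2}
       = F ` {q \<in> Sigma {..<b} N. (case q of (j,u,v) \<Rightarrow>
            (j*B+u) div b ^ (Suc n - d1) = a1 \<and> (b*v + \<pi> v j) div b ^ (Suc n - d2) = a2)}"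
    proof -
      have "{p\<in>F ` S. fst p div b ^ (m - d1) = a1 \<and> snd p div b ^ (m - d2) = a2}
         = F ` {q\<in>S. fst (F q) div b ^ (m - d1) = a1 \<and> snd (F q) div b ^ (m - d2) = a2}" by blast
      also have "{q\<in>S. fst (F q) div b ^ (m - d1) = a1 \<and> snd (F q) div b ^ (m - d2) = a2} =
         {q \<in> Sigma {..<b} N. (case q of (j,u,v) \<Rightarrow>
            (j*B+u) div b ^ (Suc n - d1) = a1 \<and> (b*v + \<pi> v j) div b ^ (Suc n - d2) = a2)}"
        by (auto simp: S_def F_def mn split: prod.splits)
      finally show ?thesis .
    qed
    moreover have "inj_on F {q \<in> Sigma {..<b} N. (case q of (j,u,v) \<Rightarrow>
            (j*B+u) div b ^ (Suc n - d1) = a1 \<and> (b*v + \<pi> v j) div b ^ (Suc n - d2) = a2)}"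
      using injF by (rule inj_on_subset) (auto simp: S_def)
    moreover have "card {q \<in> Sigma {..<b} N. (case q of (j,u,v) \<Rightarrow>
            (j*B+u) div b ^ (Suc n - d1) = a1 \<and> (b*v + \<pi> v j) div b ^ (Suc n - d2) = a2)} = 1"
    proof (rule count_lemma[OF assms(1) B_def])
      show "N j \<subseteq> {..<B} \<times> {..<B}" for j by (rule Nsub)
      show "card {p\<in>N j. fst p div b ^ (n - d1) = a1 \<and> snd p div b ^ (n - d2) = a2} = 1"
        if "j < b" "d1 + d2 = n" "a1 < b ^ d1" "a2 < b ^ d2" for j d1 d2 a1 a2
        using Nnet that by blast
      show "bij_betw (\<pi> i) {..<b} {..<b}" if "i < B" for i
        using assms(5) that mn B_def by simp
    qed (use that mn in auto)
    ultimately show ?thesis by (simp add: card_image)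
  qed
  show ?thesis unfolding img
    using net_iff[OF assms(1) NOsub] card_image[OF injF] cardS cnt by simp
qed

end
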